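(* Let $R^*_n$ and $c_n$ be real random variables defined on a probability space carrying data $(W_i)_{i=1}^n$, let $\delta_n>0$, $\tilde\delta_n\ge0$, $\gamma_n\in(0,1)$, and define $$\mathcal A_n=\sup_{\epsilon\ge\delta_n}\frac1\epsilon P(|R^*_n-c_n|\le\epsilon),\qquad \mathcal A_n(W)=\sup_{\epsilon\ge\delta_n}\frac1\epsilon P(|R^*_n-c_n|\le\epsilon\mid(W_i)_{i=1}^n).$$ Suppose that with probability at least $1-\gamma_n$ we have, for all $\epsilon\ge\delta_n$, $$P(|R^*_n-c_n|\le\epsilon)\le P(|R^*_n-c_n|\le\epsilon+\tilde\delta_n\mid(W_i)_{i=1}^n)+\gamma_n.$$ Then, with probability at least $1-\gamma_n$, $$\mathcal A_n\le\mathcal A_n(W)(1+\tilde\delta_n/\delta_n)+\gamma_n/\delta_n.$$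
   Context: In the paper $R^*_n$ is a bootstrap MinMax statistic and $c_n=c_n(\bar h,\alpha)$ its conditional $(1-\alpha)$-quantile given the data; the result is stated for these quantities but uses no further structure. *)

theory Defs
  imports "HOL-Probability.Probability"
begin

definition data_algebra :: "'a measure \<Rightarrow> 'b measure \<Rightarrow> (nat \<Rightarrow> 'a \<Rightarrow> 'b) \<Rightarrow> nat \<Rightarrow> 'a measure" where
  "data_algebra M N W n =
     sigma (space M) (\<Union>i\<in>{1..n}. {W i -` A \<inter> space M | A. A \<in> sets N})"

definition cond_prob_data :: "'a measure \<Rightarrow> 'b measure \<Rightarrow> (nat \<Rightarrow> 'a \<Rightarrow> 'b) \<Rightarrow> nat \<Rightarrow> 'a set \<Rightarrow> 'a \<Rightarrow> real" where
  "cond_prob_data M N W n A = real_cond_exp M (data_algebra M N W n) (indicator A)"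

definition near_event :: "'a measure \<Rightarrow> ('a \<Rightarrow> real) \<Rightarrow> ('a \<Rightarrow> real) \<Rightarrow> real \<Rightarrow> 'a set" where
  "near_event M R c eps = {\<omega> \<in> space M. \<bar>R \<omega> - c \<omega>\<bar> \<le> eps}"

end

theory Submission
  imports Defs
begin

lemma real_key:
  fixes P q s e d dt g :: real
  assumes "P \<le> q + g" "q / (e + dt) \<le> s" "0 \<le> P" "d \<le> e" "0 < d" "0 \<le> dt" "0 \<le> g"
  shows "P / e \<le> s * (1 + dt / d) + g / d"
proof -
  have ep: "e > 0" "e + dt > 0" using assms by auto
  have q: "q \<le> s * (e + dt)" using assms(2) ep by (simp add: divide_le_eq)
  have P: "P \<le> s * e + (s * dt + g)" using q assms(1) by (simp add: algebra_simps)
  have nn: "s * dt + g \<ge> 0"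
  proof (cases "s \<ge> 0")
    case True then have "s * dt \<ge> 0" using assms by simp
    then show ?thesis using assms(7) by linarith
  next
    case False
    then have "s * e \<le> 0" using ep by (simp add: mult_nonpos_nonneg)
    then show ?thesis using P assms(3) by linarith
  qed
  have "P / e \<le> (s * e + (s * dt + g)) / e" using P ep by (simp add: divide_right_mono)
  also have "\<dots> = s + (s * dt + g) / e" using ep by (simp add: field_simps)
  also have "\<dots> \<le> s + (s * dt + g) / d" using nn assms ep by (simp add: divide_left_mono)
  also have "\<dots> = s * (1 + dt / d) + g / d" using assms by (simp add: field_simps)
  finally show ?thesis .
qed

theorem theorem5p3:
  fixes M :: "'a measure" and N :: "'b measure" and W :: "nat \<Rightarrow> 'a \<Rightarrow> 'b" and n :: nat
    and R c :: "'a \<Rightarrow> real" and d dt g :: real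
  assumes "prob_space M"
    and "\<And>i. i \<in> {1..n} \<Longrightarrow> W i \<in> measurable M N"
    and "R \<in> borel_measurable M" and "c \<in> borel_measurable M"
    and "d > 0" and "dt \<ge> 0" and "0 < g" and "g < 1"
    and "\<exists>E \<in> sets M. measure M E \<ge> 1 - g \<and>
           (\<forall>w \<in> E. \<forall>e \<ge> d.
              measure M (near_event M R c e)
                \<le> cond_prob_data M N W n (near_event M R c (e + dt)) w + g)"
  shows "\<exists>E \<in> sets M. measure M E \<ge> 1 - g \<and>
           (\<forall>w \<in> E.
              (SUP e \<in> {d..}. ereal (measure M (near_event M R c e) / e))
                \<le> (SUP e \<in> {d..}. ereal (cond_prob_data M N W n (near_event M R c e) w / e))
                    * ereal (1 + dt / d) + ereal (g / d))"
proof -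
  obtain E where E: "E \<in> sets M" "measure M E \<ge> 1 - g"
    and H: "\<And>w e. w \<in> E \<Longrightarrow> e \<ge> d \<Longrightarrow> measure M (near_event M R c e)
                \<le> cond_prob_data M N W n (near_event M R c (e + dt)) w + g"
    using assms(9) by blast
  show ?thesis
  proof (rule bexI[OF _ E(1)], rule conjI[OF E(2)], rule ballI)
    fix w assume w: "w \<in> E"
    let ?Q = "\<lambda>e. cond_prob_data M N W n (near_event M R c e) w"
    let ?P = "\<lambda>e. measure M (near_event M R c e)"
    define S where "S = (SUP e \<in> {d..}. ereal (?Q e / e))"
    have ge: "ereal (?Q e / e) \<le> S" if "e \<ge> d" for e
      unfolding S_def using that by (intro SUP_upper) auto
    have pos: "0 < 1 + dt / d" using assms(5,6) by (simp add: add_pos_nonneg)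
    show "(SUP e \<in> {d..}. ereal (?P e / e)) \<le> S * ereal (1 + dt / d) + ereal (g / d)"
    proof (cases S)
      case (real s)
      show ?thesis
      proof (rule SUP_least)
        fix e assume e: "e \<in> {d..}"
        have "?Q (e + dt) / (e + dt) \<le> s" using ge[of "e + dt"] e assms(6) real by auto
        moreover have "?P e \<le> ?Q (e + dt) + g" using H[OF w, of e] e by simp
        moreover have "0 \<le> ?P e" by (rule measure_nonneg)
        moreover have "d \<le> e" using e by simp
        ultimately have "?P e / e \<le> s * (1 + dt / d) + g / d"
          using real_key[of "?P e" "?Q (e + dt)" g e dt s d] assms(5,6,7) by simp
        then show "ereal (?P e / e) \<le> S * ereal (1 + dt / d) + ereal (g / d)"
          using real by simp
      qed
    next
      case PInf
      then show ?thesis using pos by simp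
    next
      case MInf
      then show ?thesis using ge[of d] by simp
    qed
  qed
qed

end
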